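(* Let $R,S,T$ be multirelations $X\leftrightarrow\mathcal{P}Y$. Then (1) if $R\subseteq S$ then $R\cap T\sqsubseteq_\downarrow S\cap T$ and $S\cap T\sqsubseteq_\uparrow R\cap T$; (2) $R\Cap S\sqsubseteq_\downarrow R\sqsubseteq_\downarrow R\Cup R$, $R\Cap R\sqsubseteq_\uparrow R\sqsubseteq_\uparrow R\Cup S$ and $R\Cap R\sqsubseteq_\updownarrow R\sqsubseteq_\updownarrow R\Cup R$; (3) $R\Cap S\sqsubseteq_\downarrow R\Cup S$, $R\Cap S\sqsubseteq_\uparrow R\Cup S$ and $R\Cap S\sqsubseteq_\updownarrow R\Cup S$; (4) with respect to the preorder $\sqsubseteq_\downarrow$, $R\Cap S$ is a greatest lower bound and $R\cup S$ a least upper bound of $R$ and $S$ (unique up to $=_\downarrow$); (5) with respect to the preorder $\sqsubseteq_\uparrow$, $R\Cup S$ is a least upper bound and $R\cup S$ a greatest lower bound of $R$ and $S$ (unique up to $=_\uparrow$).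
   Context: $R\Cup S=\{(a,A\cup B)\mid (a,A)\in R,(a,B)\in S\}$, $R\Cap S=\{(a,A\cap B)\mid (a,A)\in R,(a,B)\in S\}$. $R^{\uparrow}=\{(a,A)\mid\exists B.(a,B)\in R\wedge B\subseteq A\}$, $R^{\downarrow}=\{(a,A)\mid\exists B.(a,B)\in R\wedge A\subseteq B\}$. $R\sqsubseteq_\uparrow S\iff S\subseteq R^{\uparrow}$; $R\sqsubseteq_\downarrow S\iff R\subseteq S^{\downarrow}$; $R\sqsubseteq_\updownarrow S\iff R\sqsubseteq_\downarrow S\wedge R\sqsubseteq_\uparrow S$. $R=_\downarrow S\iff R^{\downarrow}=S^{\downarrow}$, $R=_\uparrow S\iff R^{\uparrow}=S^{\uparrow}$. A greatest lower bound of $R,S$ w.r.t. a preorder $\sqsubseteq$ is an element $L$ with $L\sqsubseteq R$, $L\sqsubseteq S$ and $T\sqsubseteq L$ for every $T$ with $T\sqsubseteq R$ and $T\sqsubseteq S$; least upper bound dually. *)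

theory Defs
  imports Main
begin

text \<open>Multirelations X <-> P Y are modelled as sets of pairs ('a \<times> 'b set).\<close>

definition mcup :: "('a \<times> 'b set) set \<Rightarrow> ('a \<times> 'b set) set \<Rightarrow> ('a \<times> 'b set) set" where
  "mcup R S = {(a, A \<union> B) | a A B. (a, A) \<in> R \<and> (a, B) \<in> S}"

definition mcap :: "('a \<times> 'b set) set \<Rightarrow> ('a \<times> 'b set) set \<Rightarrow> ('a \<times> 'b set) set" where
  "mcap R S = {(a, A \<inter> B) | a A B. (a, A) \<in> R \<and> (a, B) \<in> S}"

definition up_closure :: "('a \<times> 'b set) set \<Rightarrow> ('a \<times> 'b set) set" where
  "up_closure R = {(a, A). \<exists>B. (a, B) \<in> R \<and> B \<subseteq> A}"

definition down_closure :: "('a \<times> 'b set) set \<Rightarrow> ('a \<times> 'b set) set" where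
  "down_closure R = {(a, A). \<exists>B. (a, B) \<in> R \<and> A \<subseteq> B}"

definition up_le :: "('a \<times> 'b set) set \<Rightarrow> ('a \<times> 'b set) set \<Rightarrow> bool" where
  "up_le R S \<longleftrightarrow> S \<subseteq> up_closure R"

definition down_le :: "('a \<times> 'b set) set \<Rightarrow> ('a \<times> 'b set) set \<Rightarrow> bool" where
  "down_le R S \<longleftrightarrow> R \<subseteq> down_closure S"

definition updown_le :: "('a \<times> 'b set) set \<Rightarrow> ('a \<times> 'b set) set \<Rightarrow> bool" where
  "updown_le R S \<longleftrightarrow> down_le R S \<and> up_le R S"

definition down_eq :: "('a \<times> 'b set) set \<Rightarrow> ('a \<times> 'b set) set \<Rightarrow> bool" where
  "down_eq R S \<longleftrightarrow> down_closure R = down_closure S"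

definition up_eq :: "('a \<times> 'b set) set \<Rightarrow> ('a \<times> 'b set) set \<Rightarrow> bool" where
  "up_eq R S \<longleftrightarrow> up_closure R = up_closure S"

definition is_glb :: "('c \<Rightarrow> 'c \<Rightarrow> bool) \<Rightarrow> 'c \<Rightarrow> 'c \<Rightarrow> 'c \<Rightarrow> bool" where
  "is_glb le L R S \<longleftrightarrow> le L R \<and> le L S \<and> (\<forall>T. le T R \<and> le T S \<longrightarrow> le T L)"

definition is_lub :: "('c \<Rightarrow> 'c \<Rightarrow> bool) \<Rightarrow> 'c \<Rightarrow> 'c \<Rightarrow> 'c \<Rightarrow> bool" where
  "is_lub le U R S \<longleftrightarrow> le R U \<and> le S U \<and> (\<forall>T. le R T \<and> le S T \<longrightarrow> le U T)"

end

theory Submission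
  imports Defs
begin

lemma dmono: "down_le R S \<Longrightarrow> down_closure R \<subseteq> down_closure S"
proof
  fix p assume "down_le R S" "p \<in> down_closure R"
  obtain a C where p: "p = (a, C)" by (cases p)
  from \<open>p \<in> down_closure R\<close> obtain A where A: "(a, A) \<in> R" "C \<subseteq> A"
    unfolding p down_closure_def by blast
  with \<open>down_le R S\<close> obtain B where B: "(a, B) \<in> S" "A \<subseteq> B"
    unfolding down_le_def down_closure_def by blast
  from A B show "p \<in> down_closure S" unfolding p down_closure_def by blast
qed

lemma umono: "up_le R S \<Longrightarrow> up_closure S \<subseteq> up_closure R"
proof
  fix p assume "up_le R S" "p \<in> up_closure S"
  obtain a C where p: "p = (a, C)" by (cases p)
  from \<open>p \<in> up_closure S\<close> obtain A where A: "(a, A) \<in> S" "A \<subseteq> C"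
    unfolding p up_closure_def by blast
  with \<open>up_le R S\<close> obtain B where B: "(a, B) \<in> R" "B \<subseteq> A"
    unfolding up_le_def up_closure_def by blast
  from A B show "p \<in> up_closure R" unfolding p up_closure_def by blast
qed

lemma deq: "down_le R S \<Longrightarrow> down_le S R \<Longrightarrow> down_eq R S"
  unfolding down_eq_def using dmono by blast

lemma ueq: "up_le R S \<Longrightarrow> up_le S R \<Longrightarrow> up_eq R S"
  unfolding up_eq_def using umono by blast

lemma d1: "down_le (mcap R S) R" "down_le (mcap R S) S"
  unfolding down_le_def down_closure_def mcap_def by auto
lemma d2: "down_le R (R \<union> S)" "down_le S (R \<union> S)"
  unfolding down_le_def down_closure_def by auto
lemma d3: "down_le T R \<Longrightarrow> down_le T S \<Longrightarrow> down_le T (mcap R S)"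
  unfolding down_le_def
proof
  fix p assume h: "T \<subseteq> down_closure R" "T \<subseteq> down_closure S" "p \<in> T"
  obtain a C where p: "p = (a, C)" by (cases p)
  from h obtain A where A: "(a, A) \<in> R" "C \<subseteq> A"
    unfolding p down_closure_def by blast
  from h obtain B where B: "(a, B) \<in> S" "C \<subseteq> B"
    unfolding p down_closure_def by blast
  have "(a, A \<inter> B) \<in> mcap R S" unfolding mcap_def using A B by blast
  then show "p \<in> down_closure (mcap R S)" unfolding p down_closure_def using A B by blast
qed
lemma d4: "down_le R T \<Longrightarrow> down_le S T \<Longrightarrow> down_le (R \<union> S) T"
  unfolding down_le_def by auto
lemma u1: "up_le R (mcup R S)" "up_le S (mcup R S)"
  unfolding up_le_def up_closure_def mcup_def by auto
lemma u2: "up_le (R \<union> S) R" "up_le (R \<union> S) S"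
  unfolding up_le_def up_closure_def by auto
lemma u3: "up_le R T \<Longrightarrow> up_le S T \<Longrightarrow> up_le (mcup R S) T"
  unfolding up_le_def
proof
  fix p assume h: "T \<subseteq> up_closure R" "T \<subseteq> up_closure S" "p \<in> T"
  obtain a C where p: "p = (a, C)" by (cases p)
  from h obtain A where A: "(a, A) \<in> R" "A \<subseteq> C"
    unfolding p up_closure_def by blast
  from h obtain B where B: "(a, B) \<in> S" "B \<subseteq> C"
    unfolding p up_closure_def by blast
  have "(a, A \<union> B) \<in> mcup R S" unfolding mcup_def using A B by blast
  then show "p \<in> up_closure (mcup R S)" unfolding p up_closure_def using A B by blast
qed
lemma u4: "up_le T R \<Longrightarrow> up_le T S \<Longrightarrow> up_le T (R \<union> S)"
  unfolding up_le_def by auto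

theorem lemma5p7:
  fixes R S T :: "('a \<times> 'b set) set"
  shows
   "(R \<subseteq> S \<longrightarrow> down_le (R \<inter> T) (S \<inter> T) \<and> up_le (S \<inter> T) (R \<inter> T))
    \<and> (down_le (mcap R S) R \<and> down_le R (mcup R R)
       \<and> up_le (mcap R R) R \<and> up_le R (mcup R S)
       \<and> updown_le (mcap R R) R \<and> updown_le R (mcup R R))
    \<and> (down_le (mcap R S) (mcup R S) \<and> up_le (mcap R S) (mcup R S)
       \<and> updown_le (mcap R S) (mcup R S))
    \<and> (is_glb down_le (mcap R S) R S \<and> is_lub down_le (R \<union> S) R S
       \<and> (\<forall>L. is_glb down_le L R S \<longrightarrow> down_eq L (mcap R S))
       \<and> (\<forall>U. is_lub down_le U R S \<longrightarrow> down_eq U (R \<union> S)))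
    \<and> (is_lub up_le (mcup R S) R S \<and> is_glb up_le (R \<union> S) R S
       \<and> (\<forall>U. is_lub up_le U R S \<longrightarrow> up_eq U (mcup R S))
       \<and> (\<forall>L. is_glb up_le L R S \<longrightarrow> up_eq L (R \<union> S)))"
proof -
  have p1: "R \<subseteq> S \<longrightarrow> down_le (R \<inter> T) (S \<inter> T) \<and> up_le (S \<inter> T) (R \<inter> T)"
    unfolding down_le_def up_le_def down_closure_def up_closure_def by auto
  have a1: "down_le R (mcup R R)"
    unfolding down_le_def down_closure_def mcup_def by auto
  have a2: "up_le (mcap R R) R"
    unfolding up_le_def up_closure_def mcap_def by auto
  have b1: "down_le (mcap R S) (mcup R S)"
    unfolding down_le_def down_closure_def mcup_def mcap_def by auto
  have b2: "up_le (mcap R S) (mcup R S)"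
    unfolding up_le_def up_closure_def mcup_def mcap_def by auto
  have g1: "is_glb down_le (mcap R S) R S"
    unfolding is_glb_def using d1 d3 by blast
  have g2: "is_lub down_le (R \<union> S) R S"
    unfolding is_lub_def using d2 d4 by blast
  have g3: "is_lub up_le (mcup R S) R S"
    unfolding is_lub_def using u1 u3 by blast
  have g4: "is_glb up_le (R \<union> S) R S"
    unfolding is_glb_def using u2 u4 by blast
  have h1: "\<forall>L. is_glb down_le L R S \<longrightarrow> down_eq L (mcap R S)"
    using g1 unfolding is_glb_def by (blast intro: deq)
  have h2: "\<forall>U. is_lub down_le U R S \<longrightarrow> down_eq U (R \<union> S)"
    using g2 unfolding is_lub_def by (blast intro: deq)
  have h3: "\<forall>U. is_lub up_le U R S \<longrightarrow> up_eq U (mcup R S)"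
    using g3 unfolding is_lub_def by (blast intro: ueq)
  have h4: "\<forall>L. is_glb up_le L R S \<longrightarrow> up_eq L (R \<union> S)"
    using g4 unfolding is_glb_def by (blast intro: ueq)
  have c1: "updown_le (mcap R R) R" using d1(1) a2 unfolding updown_le_def by blast
  have c2: "updown_le R (mcup R R)" using a1 u1(1) unfolding updown_le_def by blast
  have c3: "updown_le (mcap R S) (mcup R S)" using b1 b2 unfolding updown_le_def by blast
  show ?thesis
    by (intro conjI p1 d1(1) a1 a2 u1(1) c1 c2 b1 b2 c3 g1 g2 g3 g4 h1 h2 h3 h4)
qed

end
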